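(* Let $X$ be a Banach space and $\alpha$ a left tensorial norm on $c_0\otimes X$. Then there exists a unique left tensorial norm $\tilde\alpha$ on $\ell_\infty\otimes X$ whose restriction to $c_0\otimes X$ (with $c_0$ regarded canonically as a subspace of $\ell_\infty$) equals $\alpha$.
   Context: A norm $\alpha$ on $Y\otimes X$ ($Y,X$ Banach spaces) is left tensorial if $\alpha(y\otimes x)=\|y\|\|x\|$ for all $y,x$ and for every bounded operator $T\colon Y\to Y$, $T\otimes I_X$ is bounded on $(Y\otimes X,\alpha)$ with $\|T\otimes I_X\|\le\|T\|$. *)

theory Defs
  imports "HOL-Analysis.Analysis"
begin

text \<open>ell_infinity is the Banach space of bounded (continuous, nat being discrete)
  real sequences with the sup norm; c_0 is its subspace of null sequences.\<close>

type_synonym linf = "nat \<Rightarrow>\<^sub>C real"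

definition c0 :: "linf set" where
  "c0 = {y. (\<lambda>n. apply_bcontfun y n) \<longlonglongrightarrow> 0}"

text \<open>Elementary tensor y \<otimes> x, realised as the X-valued sequence n \<mapsto> y(n) x.
  The algebraic tensor product ell_infinity \<otimes> X is identified with the span of
  these sequences (this is the canonical injective realisation), and c_0 \<otimes> X with
  the span of those with y \<in> c_0.\<close>

definition tp :: "linf \<Rightarrow> 'x::real_normed_vector \<Rightarrow> (nat \<Rightarrow>\<^sub>C 'x)" where
  "tp y x = Bcontfun (\<lambda>n. apply_bcontfun y n *\<^sub>R x)"

definition linf_tensor :: "(nat \<Rightarrow>\<^sub>C 'x::real_normed_vector) set" where
  "linf_tensor = span {tp y x | y x. True}"

definition c0_tensor :: "(nat \<Rightarrow>\<^sub>C 'x::real_normed_vector) set" where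
  "c0_tensor = span {tp y x | y x. y \<in> c0}"

definition is_norm_on :: "'v::real_vector set \<Rightarrow> ('v \<Rightarrow> real) \<Rightarrow> bool" where
  "is_norm_on V N \<longleftrightarrow>
     (\<forall>u\<in>V. N u \<ge> 0 \<and> (N u = 0 \<longleftrightarrow> u = 0)) \<and>
     (\<forall>u\<in>V. \<forall>c. N (c *\<^sub>R u) = \<bar>c\<bar> * N u) \<and>
     (\<forall>u\<in>V. \<forall>v\<in>V. N (u + v) \<le> N u + N v)"

definition bounded_op_c0 :: "(linf \<Rightarrow> linf) \<Rightarrow> bool" where
  "bounded_op_c0 T \<longleftrightarrow>
     T ` c0 \<subseteq> c0 \<and>
     (\<forall>a\<in>c0. \<forall>b\<in>c0. T (a + b) = T a + T b) \<and>
     (\<forall>a\<in>c0. \<forall>c. T (c *\<^sub>R a) = c *\<^sub>R T a) \<and>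
     (\<exists>K. \<forall>a\<in>c0. norm (T a) \<le> K * norm a)"

definition c0_opnorm :: "(linf \<Rightarrow> linf) \<Rightarrow> real" where
  "c0_opnorm T = (SUP a\<in>c0. norm (T a) / norm a)"

text \<open>Left tensorial norm on c_0 \<otimes> X. The operator T \<otimes> I_X acts on a tensor
  \<Sum> y_i \<otimes> x_i as \<Sum> T y_i \<otimes> x_i; the condition is written on representatives.\<close>
definition left_tensorial_c0 :: "((nat \<Rightarrow>\<^sub>C 'x::real_normed_vector) \<Rightarrow> real) \<Rightarrow> bool" where
  "left_tensorial_c0 \<alpha> \<longleftrightarrow>
     is_norm_on c0_tensor \<alpha> \<and>
     (\<forall>y\<in>c0. \<forall>x. \<alpha> (tp y x) = norm y * norm x) \<and>
     (\<forall>T. bounded_op_c0 T \<longrightarrow>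
        (\<forall>(n::nat) (ys::nat \<Rightarrow> linf) (xs::nat \<Rightarrow> 'x). (\<forall>i<n. ys i \<in> c0) \<longrightarrow>
           \<alpha> (\<Sum>i<n. tp (T (ys i)) (xs i)) \<le> c0_opnorm T * \<alpha> (\<Sum>i<n. tp (ys i) (xs i))))"

definition left_tensorial_linf :: "((nat \<Rightarrow>\<^sub>C 'x::real_normed_vector) \<Rightarrow> real) \<Rightarrow> bool" where
  "left_tensorial_linf \<alpha> \<longleftrightarrow>
     is_norm_on linf_tensor \<alpha> \<and>
     (\<forall>y x. \<alpha> (tp y x) = norm y * norm x) \<and>
     (\<forall>T::linf \<Rightarrow>\<^sub>L linf.
        (\<forall>(n::nat) (ys::nat \<Rightarrow> linf) (xs::nat \<Rightarrow> 'x).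
           \<alpha> (\<Sum>i<n. tp (blinfun_apply T (ys i)) (xs i)) \<le> norm T * \<alpha> (\<Sum>i<n. tp (ys i) (xs i))))"

end

theory Submission
  imports Defs
begin

lemma bcont_nat: "(\<lambda>n::nat. f n) \<in> bcontfun" if "\<And>n. norm (f n) \<le> b" for f :: "nat \<Rightarrow> 'a::real_normed_vector"
  by (rule bcontfun_normI) (auto intro: that)

definition opW :: "(nat \<Rightarrow> bool) \<Rightarrow> (nat \<Rightarrow> nat) \<Rightarrow> (nat \<Rightarrow>\<^sub>C 'a::real_normed_vector) \<Rightarrow> (nat \<Rightarrow>\<^sub>C 'a)" where
  "opW P h u = Bcontfun (\<lambda>n. if P n then apply_bcontfun u (h n) else 0)"

lemma opW_apply[simp]: "apply_bcontfun (opW P h u) n = (if P n then apply_bcontfun u (h n) else 0)"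
proof -
  have "(\<lambda>n. if P n then apply_bcontfun u (h n) else 0) \<in> bcontfun"
    by (rule bcont_nat[where b="norm u"]) (auto simp: norm_bounded)
  then show ?thesis unfolding opW_def by (simp add: Bcontfun_inverse)
qed

lemma tp_apply[simp]: "apply_bcontfun (tp y x) n = apply_bcontfun y n *\<^sub>R x"
proof -
  have "(\<lambda>n. apply_bcontfun y n *\<^sub>R x) \<in> bcontfun"
    by (rule bcont_nat[where b="norm y * norm x"]) (auto intro!: mult_right_mono, metis norm_bounded real_norm_def)
  then show ?thesis unfolding tp_def by (simp add: Bcontfun_inverse)
qed

lemma opW_add: "opW P h (u + v) = opW P h u + opW P h v"
  by (rule bcontfun_eqI) auto
lemma opW_scale: "opW P h (c *\<^sub>R u) = c *\<^sub>R opW P h u"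
  by (rule bcontfun_eqI) auto
lemma opW_norm: "norm (opW P h u) \<le> norm u"
  by (rule norm_bound) (auto simp: norm_bounded)
lemma opW_linear: "bounded_linear (opW P h)"
  by (rule bounded_linear_intro[where K=1]) (auto simp: opW_add opW_scale opW_norm)
lemma opW_zero[simp]: "opW P h 0 = 0"
  by (rule bcontfun_eqI) auto
lemma opW_sum: "opW P h (\<Sum>i<(n::nat). f i) = (\<Sum>i<n. opW P h (f i))"
  by (induct n) (auto simp: opW_add)
lemma opW_tp: "opW P h (tp y x) = tp (opW P h y) x"
  by (rule bcontfun_eqI) auto

lemma tp_add: "tp (a + b) x = tp a x + tp b x" by (rule bcontfun_eqI) (auto simp: scaleR_add_left)
lemma tp_diff: "tp (a - b) x = tp a x - tp b x" by (rule bcontfun_eqI) (auto simp: scaleR_diff_left)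
lemma tp_scale: "tp (c *\<^sub>R a) x = c *\<^sub>R tp a x" by (rule bcontfun_eqI) auto
lemma tp_zero: "tp 0 x = 0" by (rule bcontfun_eqI) auto

lemma opW_c0: "opW (\<lambda>n. n < N) h y \<in> c0"
proof -
  have "eventually (\<lambda>n. apply_bcontfun (opW (\<lambda>n. n < N) h y) n = 0) sequentially"
    by (rule eventually_sequentiallyI[of N]) auto
  then show ?thesis unfolding c0_def by (auto intro: tendsto_eventually)
qed

lemma span_repr:
  assumes "u \<in> span {tp y x | y x. P y}" "\<And>c y. P y \<Longrightarrow> P (c *\<^sub>R y)"
  shows "\<exists>(n::nat) ys xs. (\<forall>i<n. P (ys i)) \<and> u = (\<Sum>i<n. tp (ys i) (xs i))"
  using assms(1)
proof (induction rule: span_induct_alt)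
  case base
  show ?case by (intro exI[where x="0::nat"]) simp
next
  case (step c z w)
  from step(1) obtain y x where yx: "P y" "z = tp y x" by auto
  from step(2) obtain n :: nat and ys xs where h: "\<forall>i<n. P (ys i)" "w = (\<Sum>i<n. tp (ys i) (xs i))" by blast
  define ys' where "ys' = (\<lambda>i. case i of 0 \<Rightarrow> c *\<^sub>R y | Suc j \<Rightarrow> ys j)"
  define xs' where "xs' = (\<lambda>i. case i of 0 \<Rightarrow> x | Suc j \<Rightarrow> xs j)"
  have "c *\<^sub>R z + w = (\<Sum>i<Suc n. tp (ys' i) (xs' i))"
    unfolding sum.lessThan_Suc_shift by (simp add: ys'_def xs'_def yx h tp_scale)
  moreover have "\<forall>i<Suc n. P (ys' i)"
    using h(1) assms(2)[OF yx(1)] by (auto simp: ys'_def less_Suc_eq_0_disj)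
  ultimately show ?case by blast
qed

lemma span_sum_mem: "(\<forall>i<(n::nat). P (ys i)) \<Longrightarrow> (\<Sum>i<n. tp (ys i) (xs i)) \<in> span {tp y x | y x. P y}"
  by (intro span_sum) (auto intro: span_base)



lemma norm_on_zero: "is_norm_on V N \<Longrightarrow> subspace V \<Longrightarrow> N 0 = 0"
  unfolding is_norm_on_def using subspace_0 by blast

lemma norm_on_sum:
  assumes "is_norm_on V N" "subspace V" "\<forall>i<n. f i \<in> V"
  shows "N (\<Sum>i<(n::nat). f i) \<le> (\<Sum>i<n. N (f i))"
  using assms(3)
proof (induct n)
  case 0 then show ?case using norm_on_zero[OF assms(1,2)] by simp
next
  case (Suc n)
  have mem: "(\<Sum>i<n. f i) \<in> V" using Suc(2) by (intro subspace_sum[OF assms(2)]) auto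
  have "N (\<Sum>i<Suc n. f i) = N ((\<Sum>i<n. f i) + f n)" by simp
  also have "\<dots> \<le> N (\<Sum>i<n. f i) + N (f n)"
    using assms(1) mem Suc(2) unfolding is_norm_on_def by (meson lessI)
  also have "\<dots> \<le> (\<Sum>i<n. N (f i)) + N (f n)" using Suc by auto
  finally show ?case by simp
qed

lemma norm_on_diff:
  assumes "is_norm_on V N" "subspace V" "u \<in> V" "v \<in> V"
  shows "N u \<le> N v + N (u - v)"
proof -
  have "u - v \<in> V" using assms subspace_diff by blast
  then have "N (v + (u - v)) \<le> N v + N (u - v)" using assms(1,4) unfolding is_norm_on_def by metis
  then show ?thesis by simp
qed

lemma norm_onD:
  assumes "is_norm_on V N"
  shows "u \<in> V \<Longrightarrow> N u \<ge> 0" "u \<in> V \<Longrightarrow> N u = 0 \<longleftrightarrow> u = 0"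
    "u \<in> V \<Longrightarrow> N (c *\<^sub>R u) = \<bar>c\<bar> * N u" "u \<in> V \<Longrightarrow> v \<in> V \<Longrightarrow> N (u + v) \<le> N u + N v"
  using assms unfolding is_norm_on_def by auto

lemma ltc0_D:
  assumes "left_tensorial_c0 \<alpha>"
  shows "is_norm_on c0_tensor \<alpha>" "y \<in> c0 \<Longrightarrow> \<alpha> (tp y x) = norm y * norm x"
    "bounded_op_c0 T \<Longrightarrow> \<forall>i<(n::nat). ys i \<in> c0 \<Longrightarrow>
       \<alpha> (\<Sum>i<n. tp (T (ys i)) (xs i)) \<le> c0_opnorm T * \<alpha> (\<Sum>i<n. tp (ys i) (xs i))"
  using assms unfolding left_tensorial_c0_def by simp_all

lemma ltlinf_D:
  assumes "left_tensorial_linf \<alpha>"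
  shows "is_norm_on linf_tensor \<alpha>" "\<alpha> (tp y x) = norm y * norm x"
    "\<alpha> (\<Sum>i<(n::nat). tp (blinfun_apply T (ys i)) (xs i)) \<le> norm T * \<alpha> (\<Sum>i<n. tp (ys i) (xs i))"
  using assms unfolding left_tensorial_linf_def by simp_all

lemma norm_on_tpsum:
  assumes "is_norm_on V N" "subspace V" "\<forall>i<n. tp (ys i) (xs i) \<in> V"
    "\<forall>i<n. N (tp (ys i) (xs i)) = norm (ys i) * norm (xs i)"
  shows "N (\<Sum>i<(n::nat). tp (ys i) (xs i)) \<le> (\<Sum>i<n. norm (ys i) * norm (xs i))"
  using norm_on_sum[OF assms(1,2,3)] assms(4) by simp

lemma norm_on_tpsum_le:
  assumes "is_norm_on V N" "subspace V" "\<forall>i<n. tp (ys i) (xs i) \<in> V"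
    "\<forall>i<n. N (tp (ys i) (xs i)) = norm (ys i) * norm (xs i)" "\<forall>i<n. norm (ys i) \<le> d"
  shows "N (\<Sum>i<(n::nat). tp (ys i) (xs i)) \<le> d * (\<Sum>i<n. norm (xs i))"
proof -
  have "N (\<Sum>i<(n::nat). tp (ys i) (xs i)) \<le> (\<Sum>i<n. norm (ys i) * norm (xs i))"
    by (rule norm_on_tpsum[OF assms(1-4)])
  also have "\<dots> \<le> (\<Sum>i<n. d * norm (xs i))"
    using assms(5) by (intro sum_mono mult_right_mono) auto
  finally show ?thesis by (simp add: sum_distrib_left)
qed

lemma c0_opnorm_le:
  assumes "\<forall>a\<in>c0. norm (T a) \<le> K * norm a" "0 \<le> K"
  shows "c0_opnorm T \<le> K"
  unfolding c0_opnorm_def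
proof (rule cSUP_least)
  have "0 \<in> c0" unfolding c0_def by simp
  then show "c0 \<noteq> {}" by blast
  fix a assume "a \<in> c0"
  then have h: "norm (T a) \<le> K * norm a" using assms by auto
  show "norm (T a) / norm a \<le> K"
  proof (cases "norm a = 0")
    case True then show ?thesis using assms by simp
  next
    case False then show ?thesis using h by (simp add: divide_le_eq)
  qed
qed

lemma c0_scale: assumes "y \<in> c0" shows "c *\<^sub>R y \<in> c0"
proof -
  have "(\<lambda>n. c * apply_bcontfun y n) \<longlonglongrightarrow> c * 0"
    by (intro tendsto_intros) (use assms in \<open>simp add: c0_def\<close>)
  then show ?thesis by (simp add: c0_def)
qed

lemma c0_tensor_sub: "subspace c0_tensor" unfolding c0_tensor_def by (rule subspace_span)
lemma linf_tensor_sub: "subspace linf_tensor" unfolding linf_tensor_def by (rule subspace_span)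

lemma c0_tensor_sum: "\<forall>i<(n::nat). ys i \<in> c0 \<Longrightarrow> (\<Sum>i<n. tp (ys i) (xs i)) \<in> c0_tensor"
  unfolding c0_tensor_def using span_sum_mem[of n "\<lambda>y. y \<in> c0" ys xs] by simp
lemma linf_tensor_sum: "(\<Sum>i<(n::nat). tp (ys i) (xs i)) \<in> linf_tensor"
  unfolding linf_tensor_def using span_sum_mem[of n "\<lambda>y. True" ys xs] by simp
lemma c0_tensor_tp: "y \<in> c0 \<Longrightarrow> tp y x \<in> c0_tensor"
  unfolding c0_tensor_def by (auto intro: span_base)
lemma linf_tensor_tp: "tp y x \<in> linf_tensor"
  unfolding linf_tensor_def by (auto intro: span_base)

lemma c0_tensor_repr: "u \<in> c0_tensor \<Longrightarrow> \<exists>(n::nat) ys xs. (\<forall>i<n. ys i \<in> c0) \<and> u = (\<Sum>i<n. tp (ys i) (xs i))"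
  unfolding c0_tensor_def using span_repr[of u "\<lambda>y. y \<in> c0"] c0_scale by auto
lemma linf_tensor_repr: "u \<in> linf_tensor \<Longrightarrow> \<exists>(n::nat) ys xs. u = (\<Sum>i<n. tp (ys i) (xs i))"
  unfolding linf_tensor_def using span_repr[of u "\<lambda>y. True"] by auto

lemma alpha_sum_le:
  assumes "left_tensorial_c0 \<alpha>" "\<forall>i<n. ys i \<in> c0" "\<forall>i<n. norm (ys i) \<le> d"
  shows "\<alpha> (\<Sum>i<(n::nat). tp (ys i) (xs i)) \<le> d * (\<Sum>i<n. norm (xs i))"
  using assms(2,3) ltc0_D[OF assms(1)]
  by (intro norm_on_tpsum_le[OF _ c0_tensor_sub]) (auto intro: c0_tensor_tp)

lemma alpha_op:
  assumes "left_tensorial_c0 \<alpha>" "bounded_op_c0 T" "\<forall>a\<in>c0. norm (T a) \<le> K * norm a" "0 \<le> K"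
    "\<forall>i<(n::nat). ys i \<in> c0"
  shows "\<alpha> (\<Sum>i<n. tp (T (ys i)) (xs i)) \<le> K * \<alpha> (\<Sum>i<n. tp (ys i) (xs i))"
proof -
  have "\<alpha> (\<Sum>i<n. tp (T (ys i)) (xs i)) \<le> c0_opnorm T * \<alpha> (\<Sum>i<n. tp (ys i) (xs i))"
    using ltc0_D(3)[OF assms(1,2,5)] .
  also have "\<dots> \<le> K * \<alpha> (\<Sum>i<n. tp (ys i) (xs i))"
  proof (rule mult_right_mono)
    show "c0_opnorm T \<le> K" by (rule c0_opnorm_le[OF assms(3,4)])
    show "0 \<le> \<alpha> (\<Sum>i<n. tp (ys i) (xs i))"
      using norm_onD(1)[OF ltc0_D(1)[OF assms(1)] c0_tensor_sum[OF assms(5)]] .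
  qed
  finally show ?thesis .
qed

lemma opW_bounded_op: "bounded_op_c0 (opW (\<lambda>n. n < N) h)"
  unfolding bounded_op_c0_def
proof (intro conjI ballI allI)
  show "opW (\<lambda>n. n < N) h ` c0 \<subseteq> c0" using opW_c0 by blast
  show "\<exists>K. \<forall>a\<in>c0. norm (opW (\<lambda>n. n < N) h a) \<le> K * norm a"
    by (intro exI[where x=1]) (simp add: opW_norm[of "\<lambda>n. n < N" h])
qed (simp_all add: opW_add opW_scale)



lemma floor_close: assumes "\<lfloor>x::real\<rfloor> = \<lfloor>y\<rfloor>" shows "\<bar>x - y\<bar> < 1"
proof -
  have "of_int \<lfloor>x\<rfloor> \<le> x" "x < of_int \<lfloor>x\<rfloor> + 1" "of_int \<lfloor>y\<rfloor> \<le> y" "y < of_int \<lfloor>y\<rfloor> + 1"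
    by linarith+
  then show ?thesis using assms by linarith
qed

lemma cells:
  fixes ys :: "nat \<Rightarrow> linf" assumes "\<delta> > 0"
  shows "\<exists>(m::nat) r c. (\<forall>n. c n < m) \<and>
     (\<forall>n. \<forall>i<k. \<bar>apply_bcontfun (ys i) n - apply_bcontfun (ys i) (r (c n))\<bar> \<le> \<delta>)"
proof -
  define B where "B = (\<Sum>i<k. norm (ys i))"
  define g where "g n = map (\<lambda>i. \<lfloor>apply_bcontfun (ys i) n / \<delta>\<rfloor>) [0..<k]" for n
  define M where "M = \<lceil>B / \<delta>\<rceil> + 1"
  have bnd: "\<lfloor>apply_bcontfun (ys i) n / \<delta>\<rfloor> \<in> {-M..M}" if "i < k" for i n
  proof -
    have "\<bar>apply_bcontfun (ys i) n\<bar> \<le> norm (ys i)" using norm_bounded[of "ys i" n] by simp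
    also have "norm (ys i) \<le> B" unfolding B_def using that
      by (intro member_le_sum) auto
    finally have h: "\<bar>apply_bcontfun (ys i) n / \<delta>\<bar> \<le> B / \<delta>"
      using assms by (simp add: abs_divide divide_right_mono)
    have "B / \<delta> \<le> of_int \<lceil>B / \<delta>\<rceil>" by (rule le_of_int_ceiling)
    moreover have "real_of_int M = of_int \<lceil>B / \<delta>\<rceil> + 1" unfolding M_def by simp
    moreover have "of_int \<lfloor>apply_bcontfun (ys i) n / \<delta>\<rfloor> \<le> apply_bcontfun (ys i) n / \<delta>"
      "apply_bcontfun (ys i) n / \<delta> < of_int \<lfloor>apply_bcontfun (ys i) n / \<delta>\<rfloor> + 1" by linarith+
    ultimately have "- (of_int M :: real) \<le> of_int \<lfloor>apply_bcontfun (ys i) n / \<delta>\<rfloor>"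
      "of_int \<lfloor>apply_bcontfun (ys i) n / \<delta>\<rfloor> \<le> (of_int M :: real)"
      using abs_le_D1[OF h] abs_le_D2[OF h] \<open>real_of_int M = of_int \<lceil>B / \<delta>\<rceil> + 1\<close> by linarith+
    then show ?thesis by simp
  qed
  define G where "G = range g"
  have "G \<subseteq> {xs. set xs \<subseteq> {-M..M} \<and> length xs = k}"
    unfolding G_def g_def using bnd by auto
  then have finG: "finite G" using finite_lists_length_eq[of "{-M..M}" k] finite_subset by blast
  obtain e where e: "bij_betw e {0..<card G} G" using ex_bij_betw_nat_finite[OF finG] by blast
  define m where "m = card G"
  define c where "c n = inv_into {0..<m} e (g n)" for n
  define r where "r j = (SOME n. g n = e j)" for j
  have eim: "e ` {0..<m} = G" using e unfolding m_def bij_betw_def by simp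
  have cm: "c n \<in> {0..<m}" for n
    unfolding c_def by (rule inv_into_into) (simp add: eim G_def)
  have ec: "e (c n) = g n" for n
    unfolding c_def by (rule f_inv_into_f) (simp add: eim G_def)
  have gr: "g (r (c n)) = g n" for n
  proof -
    have "\<exists>n'. g n' = e (c n)" using ec[of n] by metis
    then have "g (r (c n)) = e (c n)" unfolding r_def by (rule someI_ex)
    then show ?thesis using ec by simp
  qed
  have close: "\<bar>apply_bcontfun (ys i) n - apply_bcontfun (ys i) (r (c n))\<bar> \<le> \<delta>" if "i < k" for n i
  proof -
    have "g (r (c n)) ! i = g n ! i" using gr by simp
    then have "\<lfloor>apply_bcontfun (ys i) (r (c n)) / \<delta>\<rfloor> = \<lfloor>apply_bcontfun (ys i) n / \<delta>\<rfloor>"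
      using that unfolding g_def by simp
    then have "\<bar>apply_bcontfun (ys i) n / \<delta> - apply_bcontfun (ys i) (r (c n)) / \<delta>\<bar> < 1"
      by (intro floor_close) simp
    then have "\<bar>(apply_bcontfun (ys i) n - apply_bcontfun (ys i) (r (c n))) / \<delta>\<bar> < 1"
      by (simp add: diff_divide_distrib)
    then show ?thesis using assms by (simp add: abs_divide)
  qed
  show ?thesis
    by (rule exI[where x=m], rule exI[where x=r], rule exI[where x=c]) (use cm close in auto)
qed



definition tr :: "nat \<Rightarrow> (nat \<Rightarrow>\<^sub>C 'a::real_normed_vector) \<Rightarrow> (nat \<Rightarrow>\<^sub>C 'a)" where
  "tr N = opW (\<lambda>n. n < N) id"

definition betaE :: "((nat \<Rightarrow>\<^sub>C 'x::real_normed_vector) \<Rightarrow> real) \<Rightarrow> (nat \<Rightarrow>\<^sub>C 'x) \<Rightarrow> real" where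
  "betaE \<alpha> u = (SUP N. \<alpha> (tr N u))"

lemma opW_sum_tp: "opW P h (\<Sum>i<(n::nat). tp (ys i) (xs i)) = (\<Sum>i<n. tp (opW P h (ys i)) (xs i))"
  by (simp add: opW_sum opW_tp)

lemma opW_blinfun: "blinfun_apply (Blinfun (opW P h)) = opW P h"
  by (rule bounded_linear_Blinfun_apply[OF opW_linear])

lemma opW_blinfun_norm: "norm (Blinfun (opW P h)) \<le> 1"
  by (rule norm_blinfun_bound) (auto simp: opW_blinfun opW_norm)

lemma tr_c0_tensor: "u \<in> linf_tensor \<Longrightarrow> tr N u \<in> c0_tensor"
proof -
  assume "u \<in> linf_tensor"
  then obtain n :: nat and ys xs where u: "u = (\<Sum>i<n. tp (ys i) (xs i))" using linf_tensor_repr by blast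
  show ?thesis unfolding u tr_def opW_sum_tp by (rule c0_tensor_sum) (simp add: opW_c0)
qed

lemma beta_bdd:
  assumes lt: "left_tensorial_c0 \<alpha>" and u: "u \<in> linf_tensor"
  shows "bdd_above (range (\<lambda>N. \<alpha> (tr N u)))"
proof -
  obtain n :: nat and ys xs where u: "u = (\<Sum>i<n. tp (ys i) (xs i))" using linf_tensor_repr u by blast
  have "\<alpha> (tr N u) \<le> (\<Sum>i<n. norm (ys i) * norm (xs i))" for N
  proof -
    have "\<alpha> (tr N u) = \<alpha> (\<Sum>i<n. tp (tr N (ys i)) (xs i))" unfolding u tr_def opW_sum_tp ..
    also have "\<dots> \<le> (\<Sum>i<n. norm (tr N (ys i)) * norm (xs i))"
      by (rule norm_on_tpsum[OF ltc0_D(1)[OF lt] c0_tensor_sub])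
        (auto simp: tr_def opW_c0 c0_tensor_tp ltc0_D(2)[OF lt])
    also have "\<dots> \<le> (\<Sum>i<n. norm (ys i) * norm (xs i))"
      by (intro sum_mono mult_right_mono) (auto simp: tr_def opW_norm)
    finally show ?thesis .
  qed
  then show ?thesis by (intro bdd_aboveI2) blast
qed

lemma beta_upper: "left_tensorial_c0 \<alpha> \<Longrightarrow> u \<in> linf_tensor \<Longrightarrow> \<alpha> (tr N u) \<le> betaE \<alpha> u"
  unfolding betaE_def by (rule cSUP_upper) (auto intro: beta_bdd)

lemma beta_Ju:
  assumes lt: "left_tensorial_c0 \<alpha>"
  shows "\<alpha> (\<Sum>i<(n::nat). tp (opW (\<lambda>j. j < m) r (ys i)) (xs i)) \<le> betaE \<alpha> (\<Sum>i<n. tp (ys i) (xs i))"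
proof -
  define N where "N = Suc (\<Sum>j<m. r j)"
  have rN: "r j < N" if "j < m" for j
  proof -
    have "r j \<le> (\<Sum>j<m. r j)" using that by (intro member_le_sum) auto
    then show ?thesis unfolding N_def by simp
  qed
  have J: "opW (\<lambda>j. j < m) r y = opW (\<lambda>j. j < m) r (tr N y)" for y :: linf
    by (rule bcontfun_eqI) (auto simp: tr_def rN)
  have "\<alpha> (\<Sum>i<n. tp (opW (\<lambda>j. j < m) r (ys i)) (xs i))
      = \<alpha> (\<Sum>i<n. tp (opW (\<lambda>j. j < m) r (tr N (ys i))) (xs i))" by (simp add: J[symmetric])
  also have "\<dots> \<le> 1 * \<alpha> (\<Sum>i<n. tp (tr N (ys i)) (xs i))"
    by (rule alpha_op[OF lt opW_bounded_op]) (auto simp: opW_norm tr_def opW_c0)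
  also have "\<dots> = \<alpha> (tr N (\<Sum>i<n. tp (ys i) (xs i)))" by (simp add: tr_def opW_sum_tp)
  also have "\<dots> \<le> betaE \<alpha> (\<Sum>i<n. tp (ys i) (xs i))" by (rule beta_upper[OF lt linf_tensor_sum])
  finally show ?thesis .
qed

lemma RJ_close:
  assumes "\<forall>n. c n < m" "\<forall>n. \<bar>apply_bcontfun y n - apply_bcontfun y (r (c n))\<bar> \<le> \<delta>"
  shows "norm (y - opW (\<lambda>_. True) c (opW (\<lambda>j. j < m) r y)) \<le> \<delta>"
  by (rule norm_bound) (use assms in auto)

lemma sum_tp_diff: "(\<Sum>i<(n::nat). tp (a i) (xs i)) - (\<Sum>i<n. tp (b i) (xs i)) = (\<Sum>i<n. tp (a i - b i) (xs i))"
  by (simp add: tp_diff sum_subtractf)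

lemma eps_helper:
  assumes "(e::real) > 0" "C \<ge> 0"
  shows "e / (C + 1) > 0" "e / (C + 1) * C \<le> e"
proof -
  show "e / (C + 1) > 0" using assms by simp
  have "e * C \<le> e * (C + 1)" using assms by simp
  then show "e / (C + 1) * C \<le> e" using assms by (simp add: divide_le_eq field_simps)
qed

lemma uniq:
  fixes \<alpha> \<gamma> :: "(nat \<Rightarrow>\<^sub>C 'x::real_normed_vector) \<Rightarrow> real"
  assumes lt: "left_tensorial_c0 \<alpha>" and lg: "left_tensorial_linf \<gamma>"
    and eq: "\<forall>u\<in>c0_tensor. \<gamma> u = \<alpha> u" and u: "u \<in> linf_tensor"
  shows "\<gamma> u = betaE \<alpha> u"
proof -
  obtain n :: nat and ys xs where u: "u = (\<Sum>i<n. tp (ys i) (xs i))" using linf_tensor_repr u by blast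
  have gN: "is_norm_on linf_tensor \<gamma>" using ltlinf_D(1)[OF lg] .
  have g0: "\<gamma> w \<ge> 0" if "w \<in> linf_tensor" for w using norm_onD(1)[OF gN that] .
  have opg: "\<gamma> (\<Sum>i<n. tp (opW P h (ys i)) (xs' i)) \<le> \<gamma> (\<Sum>i<n. tp (ys i) (xs' i))" for P h and ys :: "nat \<Rightarrow> linf" and xs' :: "nat \<Rightarrow> 'x"
  proof -
    have "\<gamma> (\<Sum>i<n. tp (opW P h (ys i)) (xs' i)) \<le> norm (Blinfun (opW P h :: linf \<Rightarrow> linf)) * \<gamma> (\<Sum>i<n. tp (ys i) (xs' i))"
      using ltlinf_D(3)[OF lg, where T="Blinfun (opW P h)" and n=n and ys=ys and xs=xs'] by (simp add: opW_blinfun)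
    also have "\<dots> \<le> 1 * \<gamma> (\<Sum>i<n. tp (ys i) (xs' i))"
      by (rule mult_right_mono[OF opW_blinfun_norm g0[OF linf_tensor_sum]])
    finally show ?thesis by simp
  qed
  have ge: "betaE \<alpha> u \<le> \<gamma> u"
    unfolding betaE_def
  proof (rule cSUP_least)
    fix N
    have "tr N u \<in> c0_tensor" unfolding u by (intro tr_c0_tensor linf_tensor_sum)
    then have "\<alpha> (tr N u) = \<gamma> (tr N u)" using eq by simp
    also have "\<dots> \<le> \<gamma> u" unfolding u tr_def opW_sum_tp by (rule opg)
    finally show "\<alpha> (tr N u) \<le> \<gamma> u" .
  qed simp
  define C where "C = (\<Sum>i<n. norm (xs i))"
  have C0: "C \<ge> 0" unfolding C_def by (simp add: sum_nonneg)
  have le: "\<gamma> u \<le> betaE \<alpha> u"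
  proof (rule field_le_epsilon)
    fix e :: real assume e: "e > 0"
    define \<delta> where "\<delta> = e / (C + 1)"
    have d: "\<delta> > 0" "\<delta> * C \<le> e" using eps_helper[OF e C0] unfolding \<delta>_def by auto
    obtain m :: nat and r c where cl: "\<forall>n. c n < m"
      "\<forall>n'. \<forall>i<n. \<bar>apply_bcontfun (ys i) n' - apply_bcontfun (ys i) (r (c n'))\<bar> \<le> \<delta>"
      using cells[OF d(1), of n ys] by blast
    define J :: "linf \<Rightarrow> linf" where "J = opW (\<lambda>j. j < m) r"
    define R :: "linf \<Rightarrow> linf" where "R = opW (\<lambda>_. True) c"
    define v where "v = (\<Sum>i<n. tp (R (J (ys i))) (xs i))"
    have "\<gamma> u \<le> \<gamma> v + \<gamma> (u - v)"
      by (rule norm_on_diff[OF gN linf_tensor_sub]) (auto simp: u v_def linf_tensor_sum)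
    also have "\<gamma> v \<le> betaE \<alpha> u"
    proof -
      have "\<gamma> v \<le> \<gamma> (\<Sum>i<n. tp (J (ys i)) (xs i))" unfolding v_def R_def by (rule opg)
      also have "\<dots> = \<alpha> (\<Sum>i<n. tp (J (ys i)) (xs i))"
        using eq c0_tensor_sum[of n "\<lambda>i. J (ys i)" xs] by (simp add: J_def opW_c0)
      also have "\<dots> \<le> betaE \<alpha> u" unfolding J_def u by (rule beta_Ju[OF lt])
      finally show ?thesis .
    qed
    also have "\<gamma> (u - v) \<le> \<delta> * C"
    proof -
      have "u - v = (\<Sum>i<n. tp (ys i - R (J (ys i))) (xs i))" unfolding u v_def by (rule sum_tp_diff)
      also have "\<gamma> \<dots> \<le> \<delta> * C" unfolding C_def
        by (rule norm_on_tpsum_le[OF gN linf_tensor_sub])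
          (auto simp: linf_tensor_tp ltlinf_D(2)[OF lg] R_def J_def intro!: RJ_close cl(1) cl(2)[rule_format])
      finally show ?thesis .
    qed
    finally show "\<gamma> u \<le> betaE \<alpha> u + e" using d by linarith
  qed
  show ?thesis using ge le by simp
qed



lemma tr_apply[simp]: "apply_bcontfun (tr N u) n = (if n < N then apply_bcontfun u n else 0)"
  by (simp add: tr_def)
lemma tr_add: "tr N (u + v) = tr N u + tr N v" by (simp add: tr_def opW_add)
lemma tr_scale: "tr N (c *\<^sub>R u) = c *\<^sub>R tr N u" by (simp add: tr_def opW_scale)
lemma tr_zero[simp]: "tr N 0 = 0" by (simp add: tr_def)
lemma tr_0[simp]: "tr 0 u = 0" by (rule bcontfun_eqI) simp
lemma tr_diff: "tr N (u - v) = tr N u - tr N v" by (rule bcontfun_eqI) simp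

lemma c0_diff: assumes "a \<in> c0" "b \<in> c0" shows "a - b \<in> c0"
proof -
  have "(\<lambda>n. apply_bcontfun a n - apply_bcontfun b n) \<longlonglongrightarrow> 0 - 0"
    by (intro tendsto_intros) (use assms in \<open>simp_all add: c0_def\<close>)
  then show ?thesis by (simp add: c0_def)
qed

lemma SUP_cmult:
  fixes f :: "nat \<Rightarrow> real"
  assumes b: "bdd_above (range f)" and a: "0 \<le> a"
  shows "(SUP N. a * f N) = a * (SUP N. f N)"
proof (cases "a = 0")
  case True then show ?thesis by simp
next
  case False
  then have a: "a > 0" using a by simp
  have up: "a * f N \<le> a * (SUP N. f N)" for N
    by (rule mult_left_mono[OF cSUP_upper[OF _ b]]) (use a in auto)
  have b2: "bdd_above (range (\<lambda>N. a * f N))" using up by (intro bdd_aboveI2) blast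
  show ?thesis
  proof (rule antisym)
    show "(SUP N. a * f N) \<le> a * (SUP N. f N)" by (rule cSUP_least) (use up in auto)
    have "(SUP N. f N) \<le> (SUP N. a * f N) / a"
    proof (rule cSUP_least)
      fix N
      have "a * f N \<le> (SUP N. a * f N)" by (rule cSUP_upper[OF _ b2]) simp
      then show "f N \<le> (SUP N. a * f N) / a" using a by (simp add: le_divide_eq mult.commute)
    qed simp
    then show "a * (SUP N. f N) \<le> (SUP N. a * f N)" using a by (simp add: le_divide_eq mult.commute)
  qed
qed

lemma beta_norm:
  fixes \<alpha> :: "(nat \<Rightarrow>\<^sub>C 'x::real_normed_vector) \<Rightarrow> real"
  assumes lt: "left_tensorial_c0 \<alpha>"
  shows "is_norm_on linf_tensor (betaE \<alpha>)"
proof -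
  have aN: "is_norm_on c0_tensor \<alpha>" by (rule ltc0_D(1)[OF lt])
  have a0: "\<alpha> 0 = 0" by (rule norm_on_zero[OF aN c0_tensor_sub])
  have nonneg: "betaE \<alpha> u \<ge> 0" if "u \<in> linf_tensor" for u
    using beta_upper[OF lt that, of 0] a0 by simp
  have zero: "betaE \<alpha> 0 = 0" unfolding betaE_def by (simp add: a0)
  have iff: "betaE \<alpha> u = 0 \<longleftrightarrow> u = 0" if u: "u \<in> linf_tensor" for u
  proof
    assume b0: "betaE \<alpha> u = 0"
    show "u = 0"
    proof (rule ccontr)
      assume "u \<noteq> 0"
      then obtain n where un: "apply_bcontfun u n \<noteq> 0" using bcontfun_eqI[of u 0] by auto
      have "tr (Suc n) u \<noteq> 0"
      proof
        assume "tr (Suc n) u = 0"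
        then have "apply_bcontfun (tr (Suc n) u) n = 0" by simp
        then show False using un by simp
      qed
      then have "\<alpha> (tr (Suc n) u) \<noteq> 0" using norm_onD(2)[OF aN tr_c0_tensor[OF u]] by simp
      moreover have "\<alpha> (tr (Suc n) u) \<ge> 0" using norm_onD(1)[OF aN tr_c0_tensor[OF u]] .
      moreover have "\<alpha> (tr (Suc n) u) \<le> 0" using beta_upper[OF lt u, of "Suc n"] b0 by simp
      ultimately show False by simp
    qed
  qed (simp add: zero)
  have scale: "betaE \<alpha> (c *\<^sub>R u) = \<bar>c\<bar> * betaE \<alpha> u" if u: "u \<in> linf_tensor" for u c
  proof -
    have "betaE \<alpha> (c *\<^sub>R u) = (SUP N. \<bar>c\<bar> * \<alpha> (tr N u))"
      unfolding betaE_def tr_scale using norm_onD(3)[OF aN tr_c0_tensor[OF u]] by simp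
    also have "\<dots> = \<bar>c\<bar> * betaE \<alpha> u" unfolding betaE_def
      by (rule SUP_cmult[OF beta_bdd[OF lt u]]) simp
    finally show ?thesis .
  qed
  have tri: "betaE \<alpha> (u + v) \<le> betaE \<alpha> u + betaE \<alpha> v" if u: "u \<in> linf_tensor" and v: "v \<in> linf_tensor" for u v
    unfolding betaE_def[of \<alpha> "u + v"]
  proof (rule cSUP_least)
    fix N
    have "\<alpha> (tr N (u + v)) \<le> \<alpha> (tr N u) + \<alpha> (tr N v)"
      unfolding tr_add by (rule norm_onD(4)[OF aN tr_c0_tensor[OF u] tr_c0_tensor[OF v]])
    also have "\<dots> \<le> betaE \<alpha> u + betaE \<alpha> v" by (intro add_mono beta_upper[OF lt] u v)
    finally show "\<alpha> (tr N (u + v)) \<le> betaE \<alpha> u + betaE \<alpha> v" .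
  qed simp
  show ?thesis unfolding is_norm_on_def using nonneg iff scale tri by blast
qed

lemma beta_tp:
  fixes \<alpha> :: "(nat \<Rightarrow>\<^sub>C 'x::real_normed_vector) \<Rightarrow> real"
  assumes lt: "left_tensorial_c0 \<alpha>"
  shows "betaE \<alpha> (tp y x) = norm y * norm x"
proof -
  have trtp: "\<alpha> (tr N (tp y x)) = norm (tr N y) * norm x" for N
    using ltc0_D(2)[OF lt, of "tr N y" x] by (simp add: tr_def opW_tp opW_c0)
  have le: "betaE \<alpha> (tp y x) \<le> norm y * norm x"
    unfolding betaE_def
  proof (rule cSUP_least)
    fix N show "\<alpha> (tr N (tp y x)) \<le> norm y * norm x"
      unfolding trtp by (rule mult_right_mono) (auto simp: tr_def opW_norm)
  qed simp
  have ge: "norm y * norm x \<le> betaE \<alpha> (tp y x)"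
  proof (cases "norm x = 0")
    case True
    then show ?thesis using norm_onD(1)[OF beta_norm[OF lt] linf_tensor_tp, of y x] by simp
  next
    case False
    then have nx: "norm x > 0" by simp
    have "norm y \<le> betaE \<alpha> (tp y x) / norm x"
    proof (rule norm_bound)
      fix n
      have "norm (apply_bcontfun y n) = norm (apply_bcontfun (tr (Suc n) y) n)" by simp
      also have "\<dots> \<le> norm (tr (Suc n) y)" by (rule norm_bounded)
      finally have "norm (apply_bcontfun y n) * norm x \<le> \<alpha> (tr (Suc n) (tp y x))"
        unfolding trtp using nx by simp
      also have "\<dots> \<le> betaE \<alpha> (tp y x)" by (rule beta_upper[OF lt linf_tensor_tp])
      finally show "norm (apply_bcontfun y n) \<le> betaE \<alpha> (tp y x) / norm x"
        using nx by (simp add: le_divide_eq)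
    qed
    then show ?thesis using nx by (simp add: le_divide_eq)
  qed
  show ?thesis using le ge by simp
qed



lemma beta_T:
  fixes \<alpha> :: "(nat \<Rightarrow>\<^sub>C 'x::real_normed_vector) \<Rightarrow> real"
    and T :: "linf \<Rightarrow>\<^sub>L linf" and ys :: "nat \<Rightarrow> linf" and xs :: "nat \<Rightarrow> 'x"
  assumes lt: "left_tensorial_c0 \<alpha>"
  shows "betaE \<alpha> (\<Sum>i<(n::nat). tp (blinfun_apply T (ys i)) (xs i)) \<le> norm T * betaE \<alpha> (\<Sum>i<n. tp (ys i) (xs i))"
proof -
  define u where "u = (\<Sum>i<n. tp (ys i) (xs i))"
  define w where "w = (\<Sum>i<n. tp (blinfun_apply T (ys i)) (xs i))"
  have aN: "is_norm_on c0_tensor \<alpha>" by (rule ltc0_D(1)[OF lt])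
  define C where "C = norm T * (\<Sum>i<n. norm (xs i))"
  have C0: "C \<ge> 0" unfolding C_def by (simp add: sum_nonneg)
  show ?thesis unfolding w_def[symmetric] u_def[symmetric] betaE_def[of \<alpha> w]
  proof (rule cSUP_least)
    fix N
    show "\<alpha> (tr N w) \<le> norm T * betaE \<alpha> u"
    proof (rule field_le_epsilon)
      fix e :: real assume e: "e > 0"
      define \<delta> where "\<delta> = e / (C + 1)"
      have d: "\<delta> > 0" "\<delta> * C \<le> e" using eps_helper[OF e C0] unfolding \<delta>_def by auto
      obtain m :: nat and r c where cl: "\<forall>n. c n < m"
        "\<forall>n'. \<forall>i<n. \<bar>apply_bcontfun (ys i) n' - apply_bcontfun (ys i) (r (c n'))\<bar> \<le> \<delta>"
        using cells[OF d(1), of n ys] by blast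
      define J :: "linf \<Rightarrow> linf" where "J = opW (\<lambda>j. j < m) r"
      define R :: "linf \<Rightarrow> linf" where "R = opW (\<lambda>_. True) c"
      define S :: "linf \<Rightarrow> linf" where "S z = tr N (blinfun_apply T (R z))" for z
      define D where "D i = tr N (blinfun_apply T (ys i - R (J (ys i))))" for i
      have split: "tr N (blinfun_apply T (ys i)) = S (J (ys i)) + D i" for i
        unfolding S_def D_def by (simp add: blinfun.diff_right tr_diff)
      have Sb: "norm (S z) \<le> norm T * norm z" for z
      proof -
        have "norm (S z) \<le> norm (blinfun_apply T (R z))" unfolding S_def tr_def by (rule opW_norm)
        also have "\<dots> \<le> norm T * norm (R z)" by (rule norm_blinfun)
        also have "\<dots> \<le> norm T * norm z" unfolding R_def by (intro mult_left_mono opW_norm) simp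
        finally show ?thesis .
      qed
      have Sop: "bounded_op_c0 S"
        unfolding bounded_op_c0_def
      proof (intro conjI ballI allI)
        show "S ` c0 \<subseteq> c0" unfolding S_def tr_def using opW_c0 by blast
        show "\<exists>K. \<forall>a\<in>c0. norm (S a) \<le> K * norm a" using Sb by blast
      qed (simp_all add: S_def R_def opW_add opW_scale tr_add tr_scale blinfun.add_right blinfun.scaleR_right)
      have Dc0: "D i \<in> c0" for i unfolding D_def tr_def by (rule opW_c0)
      have Db: "norm (D i) \<le> norm T * \<delta>" if "i < n" for i
      proof -
        have "norm (D i) \<le> norm (blinfun_apply T (ys i - R (J (ys i))))" unfolding D_def tr_def by (rule opW_norm)
        also have "\<dots> \<le> norm T * norm (ys i - R (J (ys i)))" by (rule norm_blinfun)
        also have "\<dots> \<le> norm T * \<delta>" unfolding R_def J_def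
          by (intro mult_left_mono RJ_close) (use cl that in auto)
        finally show ?thesis .
      qed
      have "tr N w = (\<Sum>i<n. tp (S (J (ys i))) (xs i)) + (\<Sum>i<n. tp (D i) (xs i))"
        unfolding w_def tr_def opW_sum_tp unfolding tr_def[symmetric] split
        by (simp add: tp_add sum.distrib)
      also have "\<alpha> \<dots> \<le> \<alpha> (\<Sum>i<n. tp (S (J (ys i))) (xs i)) + \<alpha> (\<Sum>i<n. tp (D i) (xs i))"
        by (rule norm_onD(4)[OF aN]; rule c0_tensor_sum) (auto simp: Dc0 J_def opW_c0 intro: Sop[unfolded bounded_op_c0_def, THEN conjunct1, THEN subsetD])
      also have "\<alpha> (\<Sum>i<n. tp (S (J (ys i))) (xs i)) \<le> norm T * \<alpha> (\<Sum>i<n. tp (J (ys i)) (xs i))"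
        by (rule alpha_op[OF lt Sop]) (auto simp: Sb J_def opW_c0)
      also have "\<dots> \<le> norm T * betaE \<alpha> u"
        unfolding u_def J_def by (intro mult_left_mono beta_Ju[OF lt]) simp
      also have "\<alpha> (\<Sum>i<n. tp (D i) (xs i)) \<le> norm T * \<delta> * (\<Sum>i<n. norm (xs i))"
        by (rule alpha_sum_le[OF lt]) (auto simp: Dc0 Db)
      also have "norm T * \<delta> * (\<Sum>i<n. norm (xs i)) = \<delta> * C" unfolding C_def by simp
      finally show "\<alpha> (tr N w) \<le> norm T * betaE \<alpha> u + e" using d by linarith
    qed
  qed simp
qed

lemma c0_tail:
  assumes "y \<in> c0" "\<delta> > 0"
  shows "\<exists>N0. \<forall>N\<ge>N0. norm (y - tr N y) \<le> \<delta>"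
proof -
  from assms(1) have "(\<lambda>n. apply_bcontfun y n) \<longlonglongrightarrow> 0" by (simp add: c0_def)
  from LIMSEQ_D[OF this assms(2)] obtain N0 where N0: "\<forall>n\<ge>N0. norm (apply_bcontfun y n - 0) < \<delta>" by blast
  have "norm (y - tr N y) \<le> \<delta>" if "N \<ge> N0" for N
    by (rule norm_bound) (use N0 that assms(2) in \<open>auto simp: less_imp_le\<close>)
  then show ?thesis by blast
qed

lemma beta_eq:
  fixes \<alpha> :: "(nat \<Rightarrow>\<^sub>C 'x::real_normed_vector) \<Rightarrow> real"
  assumes lt: "left_tensorial_c0 \<alpha>" and u: "u \<in> c0_tensor"
  shows "betaE \<alpha> u = \<alpha> u"
proof -
  obtain n :: nat and ys xs where ys: "\<forall>i<n. ys i \<in> c0" and u: "u = (\<Sum>i<n. tp (ys i) (xs i))"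
    using c0_tensor_repr[OF u] by blast
  have aN: "is_norm_on c0_tensor \<alpha>" by (rule ltc0_D(1)[OF lt])
  have le: "betaE \<alpha> u \<le> \<alpha> u"
    unfolding betaE_def
  proof (rule cSUP_least)
    fix N
    have "\<alpha> (tr N u) = \<alpha> (\<Sum>i<n. tp (opW (\<lambda>n. n < N) id (ys i)) (xs i))" unfolding u tr_def opW_sum_tp ..
    also have "\<dots> \<le> 1 * \<alpha> u" unfolding u
      by (rule alpha_op[OF lt opW_bounded_op]) (auto simp: opW_norm ys)
    finally show "\<alpha> (tr N u) \<le> \<alpha> u" by simp
  qed simp
  define C where "C = (\<Sum>i<n. norm (xs i))"
  have C0: "C \<ge> 0" unfolding C_def by (simp add: sum_nonneg)
  have ge: "\<alpha> u \<le> betaE \<alpha> u"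
  proof (rule field_le_epsilon)
    fix e :: real assume e: "e > 0"
    define \<delta> where "\<delta> = e / (C + 1)"
    have d: "\<delta> > 0" "\<delta> * C \<le> e" using eps_helper[OF e C0] unfolding \<delta>_def by auto
    have "\<forall>i. \<exists>N0. i < n \<longrightarrow> (\<forall>N\<ge>N0. norm (ys i - tr N (ys i)) \<le> \<delta>)"
      using c0_tail[OF _ d(1)] ys by blast
    then obtain f where f: "\<forall>i<n. \<forall>N\<ge>f i. norm (ys i - tr N (ys i)) \<le> \<delta>" by metis
    define N where "N = (\<Sum>i<n. f i)"
    have fN: "norm (ys i - tr N (ys i)) \<le> \<delta>" if "i < n" for i
    proof -
      have "f i \<le> N" unfolding N_def using that by (intro member_le_sum) auto
      then show ?thesis using f that by blast
    qed
    have uc: "u \<in> linf_tensor" unfolding u by (rule linf_tensor_sum)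
    have "\<alpha> u \<le> \<alpha> (tr N u) + \<alpha> (u - tr N u)"
      by (rule norm_on_diff[OF aN c0_tensor_sub]) (auto simp: u c0_tensor_sum ys intro: tr_c0_tensor linf_tensor_sum)
    also have "\<alpha> (tr N u) \<le> betaE \<alpha> u" by (rule beta_upper[OF lt uc])
    also have "\<alpha> (u - tr N u) \<le> \<delta> * C"
    proof -
      have "u - tr N u = (\<Sum>i<n. tp (ys i - tr N (ys i)) (xs i))"
        unfolding u tr_def opW_sum_tp by (rule sum_tp_diff)
      also have "\<alpha> \<dots> \<le> \<delta> * C" unfolding C_def
        by (rule alpha_sum_le[OF lt]) (auto simp: fN[unfolded tr_def] ys c0_diff tr_def opW_c0)
      finally show ?thesis .
    qed
    finally show "\<alpha> u \<le> betaE \<alpha> u + e" using d by linarith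
  qed
  show ?thesis using le ge by simp
qed

theorem proposition1p3:
  fixes \<alpha> :: "(nat \<Rightarrow>\<^sub>C 'x::banach) \<Rightarrow> real"
  assumes "left_tensorial_c0 \<alpha>"
  shows "\<exists>\<beta>. left_tensorial_linf \<beta> \<and> (\<forall>u\<in>c0_tensor. \<beta> u = \<alpha> u) \<and>
           (\<forall>\<gamma>. left_tensorial_linf \<gamma> \<and> (\<forall>u\<in>c0_tensor. \<gamma> u = \<alpha> u) \<longrightarrow>
                 (\<forall>u\<in>linf_tensor. \<gamma> u = \<beta> u))"
proof (intro exI[where x="betaE \<alpha>"] conjI allI impI ballI)
  show "left_tensorial_linf (betaE \<alpha>)"
    unfolding left_tensorial_linf_def
    using beta_norm[OF assms] beta_tp[OF assms] beta_T[OF assms] by blast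
  show "betaE \<alpha> u = \<alpha> u" if "u \<in> c0_tensor" for u by (rule beta_eq[OF assms that])
  show "\<gamma> u = betaE \<alpha> u" if "left_tensorial_linf \<gamma> \<and> (\<forall>u\<in>c0_tensor. \<gamma> u = \<alpha> u)" "u \<in> linf_tensor" for \<gamma> u
    using uniq[OF assms _ _ that(2)] that(1) by blast
qed


end
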